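(* The action map $\Omega_u\times Int(P)\to\Omega_u$, $(A,a)\mapsto Aa$, is open.
   Context: Standing assumptions: $G$ is a second countable locally compact group with left Haar measure $dg$; $P\subset G$ is a closed subsemigroup with identity $e\in P$, such that $G=PP^{-1}$ and the interior $Int(P)$ of $P$ is dense in $P$. $\mathcal{C}(G)$ denotes the space of closed subsets of $G$ with the Vietoris (Fell) topology, a compact metrisable topology in which, for a metric $d$ on $G$ compatible with its topology, a sequence $A_n$ converges to $A$ iff $\{x:\limsup_n d(x,A_n)=0\}=\{x:\liminf_n d(x,A_n)=0\}=A$. $\Omega_u:=\{A\in\mathcal{C}(G): P^{-1}\subset A,\ P^{-1}A\subset A\}$, a compact subspace of $\mathcal{C}(G)$, with right $P$-action $A\cdot a=Aa=\{xa:x\in A\}$. *)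

theory Defs
  imports "HOL-Analysis.Analysis"
begin

text \<open>The group G is written additively (class group_add is NOT assumed commutative):
  x y^{-1} becomes x + (- y), identity e becomes 0.\<close>

definition fell_topology :: "('a::topological_space) set topology" where
  "fell_topology =
     subtopology
       (topology_generated_by
          ({{A. A \<inter> K = {}} | K. compact K} \<union> {{A. A \<inter> U \<noteq> {}} | U. open U}))
       {A. closed A}"

definition Omega_u :: "('a::{topological_space, group_add}) set \<Rightarrow> 'a set set" where
  "Omega_u P = {A. closed A \<and> uminus ` P \<subseteq> A \<and>
                   (\<forall>p\<in>P. \<forall>x\<in>A. - p + x \<in> A)}"

definition right_translate :: "('a::group_add) set \<Rightarrow> 'a \<Rightarrow> 'a set" where
  "right_translate A a = (\<lambda>x. x + a) ` A"

end

theory Submission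
  imports Defs
begin

lemma haus_t2: "Hausdorff_space (euclidean :: 'a::t2_space topology)"
  unfolding Hausdorff_space_def disjnt_def by (simp add: separation_t2)

lemma cont_add_sub: "continuous_on UNIV (\<lambda>z::('a::topological_group_add \<times> 'a). fst z + - snd z)"
  by (intro continuous_intros)

lemma cont_add2: "continuous_on UNIV (\<lambda>z::('a::topological_group_add \<times> 'a). snd z + fst z)"
  by (intro continuous_intros)

lemma compact_nbhd:
  fixes K F :: "'a::{topological_group_add,t2_space} set"
  assumes lc: "locally_compact_space (euclidean :: 'a topology)"
    and K: "compact K" and F: "closed F" and d: "K \<inter> F = {}"
  shows "\<exists>C Q. compact C \<and> open Q \<and> 0 \<in> Q \<and> Q \<subseteq> C \<and> (\<forall>k\<in>K. \<forall>c\<in>C. k + c \<notin> F)"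
proof -
  define W where "W = (\<lambda>z::'a\<times>'a. snd z + fst z) -` (- F)"
  have oW: "open W" unfolding W_def
    using open_vimage[OF _ cont_add2] F by auto
  have "{0} \<times> K \<subseteq> W" using d by (auto simp: W_def)
  then obtain X0 where X0: "0 \<in> X0" "open X0" "X0 \<times> K \<subseteq> W"
    using Elementary_Topology.tube_lemma[OF K oW] by blast
  have "neighbourhood_base_of (compactin euclidean) (euclidean :: 'a topology)"
    using locally_compact_space_neighbourhood_base[of "euclidean :: 'a topology"] lc haus_t2 by blast
  then have "\<exists>U V. openin euclidean U \<and> compactin euclidean V \<and> 0 \<in> U \<and> U \<subseteq> V \<and> V \<subseteq> X0"
    unfolding neighbourhood_base_of using X0 by (metis open_openin)
  then obtain U V where UV: "open U" "compact V" "0 \<in> U" "U \<subseteq> V" "V \<subseteq> X0"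
    by auto
  show ?thesis
  proof (intro exI conjI ballI)
    fix k c assume "k \<in> K" "c \<in> V"
    then have "(c,k) \<in> X0 \<times> K" using UV by blast
    then have "(c,k) \<in> W" using X0(3) by blast
    then show "k + c \<notin> F" by (simp add: W_def)
  qed (use UV in simp_all)
qed

abbreviation "SB \<equiv> ({{A. A \<inter> K = {}} | K. compact K} \<union> {{A. A \<inter> U \<noteq> {}} | U. open U})"

lemma SB_miss: "compact K \<Longrightarrow> {A. A \<inter> K = {}} \<in> SB" by auto
lemma SB_hit: "open U \<Longrightarrow> {A. A \<inter> U \<noteq> {}} \<in> SB" by auto

lemma good:
  fixes X :: "('a::{topological_group_add,t2_space}) set set"
  assumes lc: "locally_compact_space (euclidean :: 'a topology)"
    and g: "generate_topology_on SB X"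
  shows "closed B0 \<Longrightarrow> right_translate B0 (-b0) \<in> X \<Longrightarrow>
    \<exists>N T. generate_topology_on SB N \<and> open T \<and> b0 \<in> T \<and> B0 \<in> N \<and>
      (\<forall>B\<in>N. \<forall>b\<in>T. right_translate B (-b) \<in> X)"
  using g
proof (induction arbitrary: B0 b0)
  case Empty
  then show ?case by simp
next
  case (Int X1 X2)
  have a1: "right_translate B0 (-b0) \<in> X1" "right_translate B0 (-b0) \<in> X2" using Int.prems by auto
  obtain N1 T1 N2 T2 where
    1: "generate_topology_on SB N1" "open T1" "b0 \<in> T1" "B0 \<in> N1" "\<forall>B\<in>N1. \<forall>b\<in>T1. right_translate B (-b) \<in> X1"
    and 2: "generate_topology_on SB N2" "open T2" "b0 \<in> T2" "B0 \<in> N2" "\<forall>B\<in>N2. \<forall>b\<in>T2. right_translate B (-b) \<in> X2"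
    using Int.IH(1)[OF Int.prems(1) a1(1)] Int.IH(2)[OF Int.prems(1) a1(2)] by blast
  show ?case
    apply (rule exI[of _ "N1 \<inter> N2"], rule exI[of _ "T1 \<inter> T2"])
    using 1 2 by (auto intro: generate_topology_on.Int)
next
  case (UN K)
  then obtain k where k: "k \<in> K" "right_translate B0 (-b0) \<in> k" by blast
  then obtain N T where "generate_topology_on SB N" "open T" "b0 \<in> T" "B0 \<in> N" "\<forall>B\<in>N. \<forall>b\<in>T. right_translate B (-b) \<in> k"
    using UN.IH[OF k(1) UN.prems(1) k(2)] by blast
  then show ?case using k(1) by blast
next
  case (Basis s)
  then consider (miss) K where "compact K" "s = {A. A \<inter> K = {}}" | (hit) U where "open U" "s = {A. A \<inter> U \<noteq> {}}"
    using Basis.hyps by auto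
  then show ?case
  proof cases
    case miss
    define K' where "K' = (\<lambda>x. x + b0) ` K"
    have cK': "compact K'" unfolding K'_def
      by (rule compact_continuous_image[OF _ \<open>compact K\<close>]) (intro continuous_intros)
    have dK': "K' \<inter> B0 = {}"
    proof -
      { fix x assume "x \<in> K" "x + b0 \<in> B0"
        then have "(x + b0) + - b0 \<in> right_translate B0 (-b0)" unfolding right_translate_def by blast
        then have "x \<in> right_translate B0 (-b0)" by (simp add: add.assoc)
        with \<open>x \<in> K\<close> Basis.prems(2) miss(2) have False by blast }
      then show ?thesis unfolding K'_def by blast
    qed
    obtain C Q where CQ: "compact C" "open Q" "0 \<in> Q" "Q \<subseteq> C" "\<forall>k\<in>K'. \<forall>c\<in>C. k + c \<notin> B0"
      using compact_nbhd[OF lc cK' Basis.prems(1) dK'] by blast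
    define KC where "KC = (\<lambda>z. fst z + snd z) ` (K' \<times> C)"
    have cKC: "compact KC" unfolding KC_def
      by (rule compact_continuous_image[OF _ compact_Times[OF cK' CQ(1)]]) (intro continuous_intros)
    define T where "T = (\<lambda>b. - b0 + b) -` Q"
    have oT: "open T" unfolding T_def
      by (rule open_vimage[OF CQ(2)]) (intro continuous_intros)
    show ?thesis
    proof (intro exI conjI ballI)
      show "generate_topology_on SB {A. A \<inter> KC = {}}"
        using cKC by (intro generate_topology_on.Basis SB_miss)
      show "open T" by (rule oT)
      show "b0 \<in> T" using CQ(3) by (simp add: T_def)
      show "B0 \<in> {A. A \<inter> KC = {}}"
      proof -
        have "y \<notin> KC" if "y \<in> B0" for y
        proof
          assume "y \<in> KC"
          then obtain z where z: "z \<in> K' \<times> C" "y = fst z + snd z"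
            unfolding KC_def by (rule imageE)
          then show False using CQ(5) that by (cases z) auto
        qed
        then show ?thesis by auto
      qed
      fix B b assume B: "B \<in> {A. A \<inter> KC = {}}" and b: "b \<in> T"
      have "right_translate B (-b) \<inter> K = {}"
      proof (rule ccontr)
        assume "right_translate B (-b) \<inter> K \<noteq> {}"
        then obtain x where x: "x \<in> B" "x + - b \<in> K" unfolding right_translate_def by blast
        have "((x + - b) + b0) + (- b0 + b) = x" by (simp add: add.assoc)
        then have "x = ((x + - b) + b0) + (- b0 + b)" by (rule sym)
        moreover have "(x + - b) + b0 \<in> K'" using x(2) unfolding K'_def by blast
        moreover have "- b0 + b \<in> C" using b CQ(4) by (auto simp: T_def)
        ultimately have "x \<in> KC" unfolding KC_def
          by (intro image_eqI[where x="((x + - b) + b0, - b0 + b)"]) auto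
        then show False using B x(1) by blast
      qed
      then show "right_translate B (-b) \<in> s" using miss(2) by simp
    qed
  next
    case hit
    have "right_translate B0 (-b0) \<inter> U \<noteq> {}" using Basis.prems(2) hit(2) by simp
    then obtain y where "y \<in> right_translate B0 (-b0)" "y \<in> U" by blast
    then obtain x where x: "x \<in> B0" "x + - b0 \<in> U"
      unfolding right_translate_def by (auto simp: image_iff)
    define W where "W = (\<lambda>z::'a\<times>'a. fst z + - snd z) -` U"
    have oW: "open W" unfolding W_def by (rule open_vimage[OF hit(1) cont_add_sub])
    have "(x, b0) \<in> W" using x by (simp add: W_def)
    then obtain S T where ST: "open S" "open T" "x \<in> S" "b0 \<in> T" "S \<times> T \<subseteq> W"
      by (rule open_prod_elim[OF oW]) blast
    show ?thesis
    proof (intro exI conjI ballI)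
      show "generate_topology_on SB {A. A \<inter> S \<noteq> {}}"
        using ST(1) by (intro generate_topology_on.Basis SB_hit)
      show "open T" "b0 \<in> T" using ST by auto
      show "B0 \<in> {A. A \<inter> S \<noteq> {}}" using x ST by auto
      fix B b assume B: "B \<in> {A. A \<inter> S \<noteq> {}}" and b: "b \<in> T"
      then obtain y where y: "y \<in> B" "y \<in> S" by blast
      then have "(y, b) \<in> W" using ST b by blast
      then have "y + - b \<in> U" by (simp add: W_def)
      then have "right_translate B (-b) \<inter> U \<noteq> {}" using y unfolding right_translate_def by blast
      then show "right_translate B (-b) \<in> s" using hit(2) by simp
    qed
  qed
qed


lemma rt_vimage: "right_translate A (a::'a::group_add) = (\<lambda>x. x + - a) -` A"
proof
  show "right_translate A a \<subseteq> (\<lambda>x. x + - a) -` A"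
    unfolding right_translate_def by (auto simp: add.assoc)
  show "(\<lambda>x. x + - a) -` A \<subseteq> right_translate A a"
  proof
    fix x assume "x \<in> (\<lambda>x. x + - a) -` A"
    then have "x + - a \<in> A" by simp
    moreover have "x = (x + - a) + a" by (simp add: add.assoc)
    ultimately show "x \<in> right_translate A a" unfolding right_translate_def by blast
  qed
qed

lemma rt_closed: assumes "closed A" shows "closed (right_translate A (a::'a::topological_group_add))"
  unfolding rt_vimage by (rule closed_vimage[OF assms]) (intro continuous_intros)

lemma rt_rt: "right_translate (right_translate A a) (b::'a::group_add) = right_translate A (a + b)"
  unfolding right_translate_def image_image by (simp add: add.assoc)

lemma rt_id: "right_translate (right_translate A a) (-a) = (A::'a::group_add set)"
  "right_translate (right_translate A (-a)) a = (A::'a::group_add set)"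
  by (simp_all only: rt_rt) (simp_all add: right_translate_def)

lemma L1:
  fixes P :: "('a::topological_group_add) set"
  assumes sg: "\<forall>p\<in>P. \<forall>q\<in>P. p + q \<in> P" and A: "A \<in> Omega_u P" and a: "a \<in> P"
  shows "right_translate A a \<in> Omega_u P"
  unfolding Omega_u_def
proof (intro CollectI conjI ballI subsetI)
  show "closed (right_translate A a)" using A rt_closed by (auto simp: Omega_u_def)
  fix y assume "y \<in> uminus ` P"
  then obtain p where p: "p \<in> P" "y = - p" by blast
  have "a + p \<in> P" using sg a p by blast
  then have "- (a + p) \<in> A" using A by (auto simp: Omega_u_def)
  then have "- p + - a \<in> A" by (simp add: minus_add)
  moreover have "y = (- p + - a) + a" using p by (simp add: add.assoc)
  ultimately show "y \<in> right_translate A a" unfolding right_translate_def by blast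
next
  fix p x assume p: "p \<in> P" and x: "x \<in> right_translate A a"
  then obtain y where y: "y \<in> A" "x = y + a" unfolding right_translate_def by blast
  have "- p + y \<in> A" using A p y by (auto simp: Omega_u_def)
  moreover have "- p + x = (- p + y) + a" using y by (simp add: add.assoc)
  ultimately show "- p + x \<in> right_translate A a" unfolding right_translate_def by (metis image_eqI)
qed

lemma L2:
  fixes P :: "('a::topological_group_add) set"
  assumes B: "B \<in> Omega_u P" and b: "b \<in> B"
  shows "right_translate B (-b) \<in> Omega_u P"
  unfolding Omega_u_def
proof (intro CollectI conjI ballI subsetI)
  show "closed (right_translate B (-b))" using B rt_closed by (auto simp: Omega_u_def)
  fix y assume "y \<in> uminus ` P"
  then obtain p where p: "p \<in> P" "y = - p" by blast
  have "- p + b \<in> B" using B b p by (auto simp: Omega_u_def)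
  moreover have "y = (- p + b) + - b" using p by (simp add: add.assoc)
  ultimately show "y \<in> right_translate B (-b)" unfolding right_translate_def by blast
next
  fix p x assume p: "p \<in> P" and x: "x \<in> right_translate B (-b)"
  then obtain y where y: "y \<in> B" "x = y + - b" unfolding right_translate_def by blast
  have "- p + y \<in> B" using B p y by (auto simp: Omega_u_def)
  moreover have "- p + x = (- p + y) + - b" using y by (simp only: add.assoc)
  ultimately show "- p + x \<in> right_translate B (-b)" unfolding right_translate_def by (metis image_eqI)
qed

lemma openin_fell: "openin fell_topology U \<longleftrightarrow> (\<exists>U'. generate_topology_on SB U' \<and> U = U' \<inter> {A. closed A})"
  unfolding fell_topology_def openin_subtopology openin_topology_generated_by_iff by blast

theorem mainTheorem6:
  fixes P :: "('a::{topological_group_add, t2_space, second_countable_topology}) set"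
  assumes "locally_compact_space (euclidean :: 'a topology)"
    and "closed P"
    and "0 \<in> P"
    and "\<forall>p\<in>P. \<forall>q\<in>P. p + q \<in> P"
    and "{p + - q | p q. p \<in> P \<and> q \<in> P} = UNIV"
    and "P \<subseteq> closure (interior P)"
  shows "open_map
           (prod_topology (subtopology fell_topology (Omega_u P))
                          (subtopology euclidean (interior P)))
           (subtopology fell_topology (Omega_u P))
           (\<lambda>(A, a). right_translate A a)"
  unfolding open_map_def
proof (intro allI impI)
  fix S assume S: "openin (prod_topology (subtopology fell_topology (Omega_u P))
                          (subtopology euclidean (interior P))) S"
  show "openin (subtopology fell_topology (Omega_u P)) ((\<lambda>(A, a). right_translate A a) ` S)"
  proof (rule openin_subopen[THEN iffD2], rule ballI)
    fix y assume "y \<in> (\<lambda>(A, a). right_translate A a) ` S"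
    then obtain A a where Aa: "(A, a) \<in> S" "y = right_translate A a" by auto
    obtain U V where UV: "openin (subtopology fell_topology (Omega_u P)) U"
        "openin (subtopology euclidean (interior P)) V" "A \<in> U" "a \<in> V" "U \<times> V \<subseteq> S"
      using openin_prod_topology_alt[THEN iffD1, OF S, rule_format, OF Aa(1)]
      by (elim exE conjE) (rule that; assumption)
    obtain U1 where U1: "openin fell_topology U1" "U = U1 \<inter> Omega_u P"
      using UV(1) unfolding openin_subtopology by (elim exE conjE) (rule that; assumption)
    obtain U2 where U2: "generate_topology_on SB U2" "U1 = U2 \<inter> {A. closed A}"
      using U1(1) unfolding openin_fell by (elim exE conjE) (rule that; assumption)
    obtain V0 where V0: "openin euclidean V0" "V = V0 \<inter> interior P"
      using UV(2) unfolding openin_subtopology by (elim exE conjE) (rule that; assumption)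
    then have V1: "open V0" "V = V0 \<inter> interior P" by simp_all
    have oV: "open V" using V1 by (simp add: open_Int)
    have VP: "V \<subseteq> P" using V1(2) interior_subset by blast
    have AO: "A \<in> Omega_u P" "A \<in> U2" using UV(3) U1 U2 by auto
    have clA: "closed A" using AO by (simp add: Omega_u_def)
    have aP: "a \<in> P" using UV(4) VP by blast
    have yO: "y \<in> Omega_u P" using L1[OF assms(4) AO(1) aP] Aa(2) by simp
    have cly: "closed y" using yO by (simp add: Omega_u_def)
    have ya: "right_translate y (-a) \<in> U2" unfolding Aa(2) rt_id(1) by (rule AO(2))
    obtain N T where NT: "generate_topology_on SB N" "open T" "a \<in> T" "y \<in> N"
        "\<forall>B\<in>N. \<forall>b\<in>T. right_translate B (-b) \<in> U2"
      using good[OF assms(1) U2(1) cly ya] by (elim exE conjE) (rule that; assumption)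
    define M where "M = (N \<inter> {B. B \<inter> (T \<inter> V) \<noteq> {}} \<inter> {A. closed A}) \<inter> Omega_u P"
    have ofell: "openin fell_topology (N \<inter> {B. B \<inter> (T \<inter> V) \<noteq> {}} \<inter> {A. closed A})"
    proof -
      have "generate_topology_on SB {B. B \<inter> (T \<inter> V) \<noteq> {}}"
        by (rule generate_topology_on.Basis, rule SB_hit, rule open_Int[OF NT(2) oV])
      then have "generate_topology_on SB (N \<inter> {B. B \<inter> (T \<inter> V) \<noteq> {}})"
        by (rule generate_topology_on.Int[OF NT(1)])
      then show ?thesis unfolding openin_fell by blast
    qed
    have oM: "openin (subtopology fell_topology (Omega_u P)) M"
      unfolding openin_subtopology M_def
      apply (rule exI[where x = "N \<inter> {B. B \<inter> (T \<inter> V) \<noteq> {}} \<inter> {A. closed A}"])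
      apply (rule conjI)
       apply (rule ofell)
      apply (rule refl)
      done
    have "uminus ` P \<subseteq> A" using AO(1) by (simp add: Omega_u_def)
    then have "0 \<in> A" using assms(3) by (metis image_eqI minus_zero subsetD)
    then have "0 + a \<in> (\<lambda>x. x + a) ` A" by (rule imageI)
    then have "a \<in> y" using Aa(2) by (simp add: right_translate_def)
    then have yM: "y \<in> M" unfolding M_def using NT(3,4) UV(4) cly yO by blast
    have "M \<subseteq> (\<lambda>(A, a). right_translate A a) ` S"
    proof
      fix B assume B: "B \<in> M"
      then obtain b where b: "b \<in> B" "b \<in> T" "b \<in> V" unfolding M_def by blast
      have BO: "B \<in> Omega_u P" "B \<in> N" using B unfolding M_def by auto
      have A'O: "right_translate B (-b) \<in> Omega_u P" by (rule L2[OF BO(1) b(1)])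
      then have "closed (right_translate B (-b))" by (simp add: Omega_u_def)
      moreover have "right_translate B (-b) \<in> U2" using NT(5) BO(2) b(2) by blast
      ultimately have "right_translate B (-b) \<in> U" using U1(2) U2(2) A'O by blast
      then have "(right_translate B (-b), b) \<in> S" using UV(5) b(3) by blast
      moreover have "B = (\<lambda>(A, a). right_translate A a) (right_translate B (-b), b)"
        by (simp only: prod.case rt_id(2))
      ultimately show "B \<in> (\<lambda>(A, a). right_translate A a) ` S" by (rule rev_image_eqI)
    qed
    then show "\<exists>T. openin (subtopology fell_topology (Omega_u P)) T \<and> y \<in> T \<and>
                  T \<subseteq> (\<lambda>(A, a). right_translate A a) ` S"
      using oM yM by blast
  qed
qed

end
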